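(* Let $f,f',g\in\mathbb{S}(\mathcal{H})$ with $f\ne-g$, $f'\ne-g$ and $d_{\mathbb{S}}(f,g)\le\frac\pi2$. Let $f_t=\Gamma(g,f,t)$ and $f'_t=\Gamma(g,f',t)$. Then $d_{\mathbb{S}}(f_t,f'_t)\le 2\,d_{\mathbb{S}}(f,f')$ for every $t\in[0,1]$.
   Context: $\mathcal{H}$ is a finite-dimensional complex Hermitian space (in the paper, the space of polynomial systems $H_{d_1}\times\dots\times H_{d_n}$ with the Weyl inner product), $\mathbb{S}(\mathcal{H})$ its unit sphere with the angular distance $d_{\mathbb{S}}(x,y)\in[0,\pi]$, $\cos d_{\mathbb{S}}(x,y)=\mathrm{Re}\langle x,y\rangle$. For $f\ne-g$ and $\alpha=d_{\mathbb{S}}(f,g)\in[0,\pi)$, $\Gamma(g,f,t)=\frac{\sin((1-t)\alpha)}{\sin\alpha}g+\frac{\sin(t\alpha)}{\sin\alpha}f$ (and $\Gamma(g,f,t)=g$ if $\alpha=0$) is the geodesic from $g$ to $f$. *)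

theory Defs
  imports "HOL-Analysis.Analysis"
begin

text \<open>Model of a finite-dimensional complex Hermitian space: C^n as complex ^ 'n,
  with Hermitian inner product linear in the first argument.\<close>

definition herm :: "complex ^ 'n \<Rightarrow> complex ^ 'n \<Rightarrow> complex" where
  "herm x y = (\<Sum>i\<in>UNIV. x $ i * cnj (y $ i))"

definition unit_sphere :: "(complex ^ 'n) set" where
  "unit_sphere = {x. Re (herm x x) = 1}"

definition dS :: "complex ^ 'n \<Rightarrow> complex ^ 'n \<Rightarrow> real" where
  "dS x y = arccos (Re (herm x y))"

definition Gamma :: "complex ^ 'n \<Rightarrow> complex ^ 'n \<Rightarrow> real \<Rightarrow> complex ^ 'n" where
  "Gamma g f t = (let \<alpha> = dS f g in
     if \<alpha> = 0 then g
     else (sin ((1 - t) * \<alpha>) / sin \<alpha>) *\<^sub>R g + (sin (t * \<alpha>) / sin \<alpha>) *\<^sub>R f)"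

end

theory Submission
  imports Defs
begin


lemma quad_aux:
  fixes P S Q T x x0 x1 :: real
  defines "h \<equiv> (\<lambda>y. 2*(P+S*y)^2 - 1 - (Q+T*y))"
  assumes "x0 \<le> x" "x \<le> x1" "h x0 \<le> 0" "h x1 \<le> 0"
  shows "h x \<le> 0"
proof (cases "x0 = x1")
  case True then show ?thesis using assms by auto
next
  case False
  hence pos: "x1 - x0 > 0" using assms by auto
  have id: "(x1-x0) * h x = (x1-x)*h x0 + (x-x0)*h x1 - 2*S^2*(x-x0)*(x1-x)*(x1-x0)"
    unfolding h_def by (simp add: algebra_simps power2_eq_square)
  have "(x1-x)*h x0 \<le> 0" using assms by (simp add: mult_nonneg_nonpos)
  moreover have "(x-x0)*h x1 \<le> 0" using assms by (simp add: mult_nonneg_nonpos)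
  moreover have "2*S^2*(x-x0)*(x1-x)*(x1-x0) \<ge> 0" using assms pos by simp
  ultimately have "(x1-x0) * h x \<le> 0" using id by linarith
  thus ?thesis using pos by (simp add: mult_le_0_iff)
qed

lemma cos_neg_aux:
  fixes s :: real
  assumes "pi/2 < s" "s < 3*pi/2"
  shows "cos s < 0"
proof (cases "s \<le> pi")
  case True
  then have "cos s < cos (pi/2)" by (intro cos_monotone_0_pi) (use assms in auto)
  then show ?thesis by simp
next
  case False
  have "0 < cos (s - pi)" by (rule cos_gt_zero) (use assms False in auto)
  then show ?thesis by simp
qed

lemma key_real:
  fixes al be t c :: real
  assumes a0: "0 \<le> al" and a1: "al \<le> pi/2" and b0: "0 \<le> be" and b1: "be < pi"
    and t0: "0 \<le> t" and t1: "t \<le> 1" and c0: "-1 \<le> c" and c1: "c \<le> 1"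
  shows "arccos (cos(t*al) * cos(t*be) + sin(t*al) * sin(t*be)*c)
           \<le> 2 * arccos (cos al * cos be + sin al * sin be * c)"
proof -
  define P where "P = cos al * cos be"
  define S where "S = sin al * sin be"
  define Q where "Q = cos (t*al) * cos (t*be)"
  define T where "T = sin (t*al) * sin (t*be)"
  define h where "h = (\<lambda>y. 2*(P+S*y)^2 - 1 - (Q+T*y))"
  have S0: "S \<ge> 0" unfolding S_def using a0 a1 b0 b1
    by (intro mult_nonneg_nonneg sin_ge_zero) auto
  have ta: "0 \<le> t*al" "t*al \<le> pi" using a0 a1 t0 t1
    using mult_nonneg_nonneg[OF t0 a0] mult_right_mono[OF t1 a0] pi_gt_zero by auto
  have tb: "0 \<le> t*be" "t*be \<le> pi" using b0 b1 t0 t1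
    using mult_nonneg_nonneg[OF t0 b0] mult_right_mono[OF t1 b0] by auto
  have T0: "T \<ge> 0" unfolding T_def using ta tb
    by (simp add: sin_ge_zero)
  have PpS: "P + S = cos (al - be)" unfolding P_def S_def by (simp add: cos_diff)
  have PmS: "P - S = cos (al + be)" unfolding P_def S_def by (simp add: cos_add)
  have QpT: "Q + T = cos (t*al - t*be)" unfolding Q_def T_def by (simp add: cos_diff)
  have QmT: "Q - T = cos (t*al + t*be)" unfolding Q_def T_def by (simp add: cos_add)
  define r where "r = P + S*c"
  define L where "L = Q + T*c"
  have rb: "-1 \<le> r \<and> r \<le> 1"
  proof -
    have "P - S \<le> r" "r \<le> P + S" unfolding r_def
      using mult_left_mono[OF c1 S0] mult_left_mono[OF c0 S0] by auto
    moreover have "-1 \<le> P - S" "P + S \<le> 1" using PmS PpS by auto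
    ultimately show ?thesis by linarith
  qed
  have Lb: "Q - T \<le> L \<and> L \<le> Q + T" unfolding L_def
      using mult_left_mono[OF c1 T0] mult_left_mono[OF c0 T0] by auto
  have Lb2: "-1 \<le> L \<and> L \<le> 1" using Lb QmT QpT
    using cos_ge_minus_one[of "t*al+t*be"] cos_le_one[of "t*al-t*be"] by linarith
  show ?thesis
  proof (cases "r \<le> 0")
    case True
    have "arccos L \<le> pi" using Lb2 by (simp add: arccos_ubound)
    moreover have "arccos 0 \<le> arccos r" using True rb by (intro arccos_le_arccos) auto
    ultimately show ?thesis unfolding r_def L_def P_def S_def Q_def T_def by simp
  next
    case False
    hence rpos: "r > 0" by simp
    have h1: "h 1 \<le> 0"
    proof -
      define d where "d = \<bar>al - be\<bar>"
      have "P + S \<ge> r" unfolding r_def using S0 c1 by (smt (verit) mult_left_le)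
      hence "cos d \<ge> 0" using rpos PpS unfolding d_def by simp
      hence dle: "d \<le> pi/2"
      proof (rule contrapos_pp)
        assume "\<not> d \<le> pi/2"
        moreover have "d < 3*pi/2" unfolding d_def using a0 a1 b0 b1 pi_gt_zero abs_le_iff[of "al-be" pi] by linarith
        ultimately have "cos d < 0" by (intro cos_neg_aux) simp_all
        thus "\<not> 0 \<le> cos d" by simp
      qed
      have "cos (2*d) \<le> cos (t*d)"
      proof -
        have d0: "0 \<le> d" unfolding d_def by simp
        have td: "t*d \<le> d" using mult_right_mono[OF t1 d0] by simp
        show ?thesis
          by (rule cos_monotone_0_pi_le) (use mult_nonneg_nonneg[OF t0 d0] td d0 dle in linarith)+
      qed
      moreover have "cos (2*d) = cos (2*(al-be))" unfolding d_def
        by (metis abs_mult abs_numeral cos_abs_real)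
      moreover have "cos (t*d) = cos (t*al - t*be)" unfolding d_def using t0
        by (metis abs_mult abs_of_nonneg cos_abs_real right_diff_distrib)
      ultimately have "cos (2*(al-be)) \<le> Q + T" using QpT by simp
      thus ?thesis unfolding h_def using PpS cos_double_cos[of "al - be"] by simp
    qed
    show ?thesis
    proof -
      have hc: "h c \<le> 0"
      proof (cases "P - S \<ge> 0")
        case True
        have hm1: "h (-1) \<le> 0"
        proof -
          define s where "s = al + be"
          have "cos s \<ge> 0" using True PmS s_def by simp
          hence sle: "s \<le> pi/2"
          proof (rule contrapos_pp)
            assume "\<not> s \<le> pi/2"
            moreover have "s < 3*pi/2" unfolding s_def using a1 b1 by simp
            ultimately have "cos s < 0" by (intro cos_neg_aux) simp_all
            thus "\<not> 0 \<le> cos s" by simp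
          qed
          have "cos (2 * s) \<le> cos (t * s)"
          proof -
            have d0: "0 \<le> s" unfolding s_def using a0 b0 by simp
            have td: "t * s \<le> s" using mult_right_mono[OF t1 d0] by simp
            show ?thesis
              by (rule cos_monotone_0_pi_le) (use mult_nonneg_nonneg[OF t0 d0] td d0 sle in linarith)+
          qed
          hence "cos (2 * s) \<le> Q - T" using QmT unfolding s_def by (simp add: distrib_left)
          thus ?thesis unfolding h_def using PmS s_def cos_double_cos[of s] by simp
        qed
        show ?thesis using quad_aux[of "-1" c 1 P S Q T] hm1 h1 c0 c1 unfolding h_def by simp
      next
        case False
        have Spos: "S > 0"
        proof (rule ccontr)
          assume "\<not> S > 0"
          hence "S = 0" using S0 by simp
          thus False using False rpos r_def by simp
        qed
        define lo where "lo = -P/S"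
        have lo_c: "lo \<le> c"
        proof -
          have "lo = (-P)/S" unfolding lo_def by simp
          also have "\<dots> \<le> c" using rpos unfolding r_def
            by (subst pos_divide_le_eq[OF Spos]) (simp add: algebra_simps)
          finally show ?thesis .
        qed
        have lo_m1: "-1 \<le> lo" unfolding lo_def using False Spos by (simp add: pos_divide_le_eq[OF Spos])
        have "P + S*lo = 0" unfolding lo_def using Spos by simp
        moreover have "Q + T*lo \<ge> -1"
        proof -
          have "Q + T*lo \<ge> Q - T" using mult_left_mono[OF lo_m1 T0] by simp
          thus ?thesis using QmT cos_ge_minus_one[of "t*al+t*be"] by linarith
        qed
        ultimately have "h lo \<le> 0" unfolding h_def by simp
        then show ?thesis using quad_aux[of lo c 1 P S Q T] h1 lo_c c1 unfolding h_def by simp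
      qed
      hence Lge: "2*r^2 - 1 \<le> L" unfolding h_def r_def L_def by simp
      define ga where "ga = arccos r"
      have g0: "0 \<le> ga" "ga \<le> pi/2" unfolding ga_def using rb rpos
        using arccos_lbound[of r] arccos_le_pi2[of r] by auto
      have c2: "cos (2*ga) = 2*r^2 - 1" unfolding ga_def using rb by (simp add: cos_double_cos)
      have "arccos L \<le> arccos (cos (2*ga))"
        using Lge Lb2 c2 by (intro arccos_le_arccos) (auto simp: cos_ge_minus_one)
      also have "\<dots> = 2*ga" using g0 by (intro arccos_cos) auto
      finally show ?thesis unfolding ga_def r_def L_def P_def S_def Q_def T_def .
    qed
  qed
qed



lemma inner_self_sum:
  fixes x y :: "'a::real_inner"
  shows "inner (x + y) (x + y) = inner x x + 2 * inner x y + inner y y"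
  by (simp add: inner_add inner_commute)

lemma decomp:
  fixes f g :: "'a::real_inner"
  assumes nf: "norm f = 1" and ng: "norm g = 1" and ne: "f \<noteq> -g"
  defines "al \<equiv> arccos (inner f g)"
  shows "\<exists>u. inner u g = 0 \<and> norm u \<le> 1 \<and> f = cos al *\<^sub>R g + sin al *\<^sub>R u
     \<and> 0 \<le> al \<and> al < pi \<and>
     (\<forall>t. (if al = 0 then g else (sin ((1 - t) * al) / sin al) *\<^sub>R g + (sin (t * al) / sin al) *\<^sub>R f)
         = cos (t * al) *\<^sub>R g + sin (t * al) *\<^sub>R u)"
proof -
  define p where "p = inner f g"
  have ff: "inner f f = 1" using nf by (metis power2_norm_eq_inner power_one)
  have gg: "inner g g = 1" using ng by (metis power2_norm_eq_inner power_one)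
  have pb: "\<bar>p\<bar> \<le> 1" unfolding p_def using Cauchy_Schwarz_ineq2[of f g] nf ng by simp
  have cal: "cos al = p" unfolding al_def p_def[symmetric] using pb by (simp add: cos_arccos_abs)
  have sal: "sin al = sqrt (1 - p^2)" unfolding al_def p_def[symmetric] using pb by (simp add: sin_arccos_abs)
  have al0: "0 \<le> al" "al \<le> pi" unfolding al_def p_def[symmetric] using pb
    by (auto simp: arccos_lbound arccos_ubound abs_le_iff)
  have alpi: "al \<noteq> pi"
  proof
    assume "al = pi"
    hence "p = -1" using cal by simp
    hence "inner (f + g) (f + g) = 0" using ff gg unfolding p_def inner_self_sum by simp
    hence "f + g = 0" by simp
    thus False using ne by (simp add: eq_neg_iff_add_eq_0)
  qed
  show ?thesis
  proof (cases "al = 0")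
    case True
    hence "p = 1" using cal by simp
    hence "inner (f - g) (f - g) = 0" using ff gg unfolding p_def
      by (simp add: inner_diff inner_commute)
    hence "f = g" by simp
    thus ?thesis using True alpi al0 by (intro exI[of _ 0]) simp
  next
    case False
    have spos: "sin al > 0" using False al0 alpi by (intro sin_gt_zero) auto
    define s where "s = sin al"
    define u where "u = (1 / s) *\<^sub>R (f - p *\<^sub>R g)"
    have s2: "s^2 = 1 - p^2" unfolding s_def sal using pb
      by (simp add: abs_square_le_1)
    have ug: "inner u g = 0" unfolding u_def p_def using gg
      by (simp add: inner_diff_left)
    have uu: "inner u u = 1"
    proof -
      have "inner (f - p *\<^sub>R g) (f - p *\<^sub>R g) = 1 - p^2" using ff gg unfolding p_def
        by (simp add: inner_diff inner_commute power2_eq_square)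
      hence "inner u u = (1 - p^2) / s^2" unfolding u_def by (simp add: power2_eq_square)
      hence "inner u u = s^2 / s^2" using s2 by simp
      moreover have "s^2 \<noteq> 0" using spos s_def by simp
      ultimately show ?thesis by simp
    qed
    have nu: "norm u \<le> 1" using uu by (simp add: norm_eq_sqrt_inner)
    have fe: "f = p *\<^sub>R g + s *\<^sub>R u" unfolding u_def using spos s_def by simp
    have ge: "\<forall>t. (if al = 0 then g else (sin ((1 - t) * al) / sin al) *\<^sub>R g + (sin (t * al) / sin al) *\<^sub>R f)
         = cos (t * al) *\<^sub>R g + sin (t * al) *\<^sub>R u"
    proof
      fix t
      have sd: "sin ((1 - t) * al) = s * cos (t*al) - p * sin (t*al)"
        unfolding s_def cal[symmetric] by (simp add: left_diff_distrib sin_diff)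
      have "(sin ((1 - t) * al) / s) *\<^sub>R g + (sin (t * al) / s) *\<^sub>R f
          = ((sin ((1 - t) * al) + p * sin (t*al)) / s) *\<^sub>R g + sin (t * al) *\<^sub>R u"
        unfolding fe using spos s_def by (simp add: algebra_simps add_divide_distrib scaleR_add_left)
      also have "\<dots> = cos (t * al) *\<^sub>R g + sin (t * al) *\<^sub>R u"
        unfolding sd using spos s_def by simp
      finally show "(if al = 0 then g else (sin ((1 - t) * al) / sin al) *\<^sub>R g + (sin (t * al) / sin al) *\<^sub>R f)
         = cos (t * al) *\<^sub>R g + sin (t * al) *\<^sub>R u" using False s_def by simp
    qed
    show ?thesis using ug nu fe ge al0 alpi cal s_def by (intro exI[of _ u]) auto
  qed
qed


lemma herm_inner: "Re (herm x y) = inner x y"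
  unfolding herm_def inner_vec_def inner_complex_def by (simp add: Re_sum)

theorem lemma2p5:
  fixes f f' g :: "complex ^ 'n"
  assumes "f \<in> unit_sphere" and "f' \<in> unit_sphere" and "g \<in> unit_sphere"
    and "f \<noteq> - g" and "f' \<noteq> - g"
    and "dS f g \<le> pi / 2"
    and "t \<in> {0..1}"
  shows "dS (Gamma g f t) (Gamma g f' t) \<le> 2 * dS f f'"
proof -
  have us: "norm x = 1" if "x \<in> unit_sphere" for x :: "complex ^ 'n"
    using that unfolding unit_sphere_def by (simp add: herm_inner norm_eq_sqrt_inner)
  have dS': "dS x y = arccos (inner x y)" for x y :: "complex ^ 'n"
    unfolding dS_def herm_inner ..
  have gg: "inner g g = 1" using us[OF assms(3)] by (metis power2_norm_eq_inner power_one)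
  define al where "al = arccos (inner f g)"
  define be where "be = arccos (inner f' g)"
  obtain u where u: "inner u g = 0" "norm u \<le> 1" "f = cos al *\<^sub>R g + sin al *\<^sub>R u"
     "0 \<le> al" "al < pi" and
     gu: "\<And>t. (if al = 0 then g else (sin ((1 - t) * al) / sin al) *\<^sub>R g + (sin (t * al) / sin al) *\<^sub>R f)
         = cos (t * al) *\<^sub>R g + sin (t * al) *\<^sub>R u"
    using decomp[OF us[OF assms(1)] us[OF assms(3)] assms(4)] unfolding al_def by blast
  obtain v where v: "inner v g = 0" "norm v \<le> 1" "f' = cos be *\<^sub>R g + sin be *\<^sub>R v"
     "0 \<le> be" "be < pi" and
     gv: "\<And>t. (if be = 0 then g else (sin ((1 - t) * be) / sin be) *\<^sub>R g + (sin (t * be) / sin be) *\<^sub>R f')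
         = cos (t * be) *\<^sub>R g + sin (t * be) *\<^sub>R v"
    using decomp[OF us[OF assms(2)] us[OF assms(3)] assms(5)] unfolding be_def by blast
  have G1: "Gamma g f t = cos (t * al) *\<^sub>R g + sin (t * al) *\<^sub>R u"
    unfolding Gamma_def Let_def dS' al_def[symmetric] using gu by simp
  have G2: "Gamma g f' t = cos (t * be) *\<^sub>R g + sin (t * be) *\<^sub>R v"
    unfolding Gamma_def Let_def dS' be_def[symmetric] using gv by simp
  define c where "c = inner u v"
  have cb: "\<bar>c\<bar> \<le> 1" unfolding c_def
    using Cauchy_Schwarz_ineq2[of u v] u(2) v(2) mult_mono[OF u(2) v(2)] by simp
  have ug: "inner g u = 0" "inner g v = 0" "inner v u = c"
    using u(1) v(1) c_def by (simp_all add: inner_commute)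
  have i1: "inner (Gamma g f t) (Gamma g f' t) = cos(t*al) * cos(t*be) + sin(t*al) * sin(t*be)*c"
    unfolding G1 G2 using u(1) v(1) ug gg c_def by (simp add: inner_add inner_commute)
  have i2: "inner f f' = cos al * cos be + sin al * sin be * c"
    apply (subst u(3), subst v(3))
    using u(1) v(1) ug gg c_def by (simp add: inner_add inner_commute)
  have a1: "al \<le> pi/2" using assms(6) unfolding dS' al_def .
  show ?thesis unfolding dS' i1 i2
    by (rule key_real) (use a1 u v assms(7) cb in \<open>auto simp: abs_le_iff\<close>)
qed

end
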